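(* For all integers $s\geq 1$, $A_{231,321}(K_{s,2}^\alpha)=2^{s-1}(s-1)+1$.
   Context: $K^\alpha_{s,2}$ is the poset on $[2s]$ whose order is generated by the covering relations $i\lessdot i+1$ for $1\le i\le s-1$ and $i\lessdot i+s$ for $1\le i\le s$ (the comb $K_{s,2}$ with $\alpha$-labeling $e_{i,j}\mapsto (j-1)s+i$). A linear extension is a permutation of $[2s]$ in which $x$ precedes $y$ whenever $x<y$ in the poset. $A_{231,321}(P)$ denotes the number of linear extensions of $P$ that avoid both patterns $231$ and $321$. *)

theory Defs
  imports Main
begin

text \<open>Covering relations of the comb poset K^alpha_{s,2} on [2s]:
  i covered by i+1 for 1 <= i <= s-1, and i covered by i+s for 1 <= i <= s.\<close>
definition comb_cover :: "nat \<Rightarrow> nat \<Rightarrow> nat \<Rightarrow> bool" where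
  "comb_cover s x y \<longleftrightarrow>
     (1 \<le> x \<and> x + 1 \<le> s \<and> y = x + 1) \<or> (1 \<le> x \<and> x \<le> s \<and> y = x + s)"

definition comb_less :: "nat \<Rightarrow> nat \<Rightarrow> nat \<Rightarrow> bool" where
  "comb_less s = (comb_cover s)\<^sup>+\<^sup>+"

definition linear_extensions :: "nat \<Rightarrow> (nat \<Rightarrow> nat \<Rightarrow> bool) \<Rightarrow> nat list set" where
  "linear_extensions n P = {w. distinct w \<and> set w = {1..n} \<and>
     (\<forall>i j. i < length w \<longrightarrow> j < length w \<longrightarrow> P (w ! i) (w ! j) \<longrightarrow> i < j)}"

definition contains_231 :: "nat list \<Rightarrow> bool" where
  "contains_231 w \<longleftrightarrow> (\<exists>i j k. i < j \<and> j < k \<and> k < length w \<and>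
      w ! k < w ! i \<and> w ! i < w ! j)"

definition contains_321 :: "nat list \<Rightarrow> bool" where
  "contains_321 w \<longleftrightarrow> (\<exists>i j k. i < j \<and> j < k \<and> k < length w \<and>
      w ! k < w ! j \<and> w ! j < w ! i)"

definition A_231_321 :: "nat \<Rightarrow> (nat \<Rightarrow> nat \<Rightarrow> bool) \<Rightarrow> nat" where
  "A_231_321 n P = card {w \<in> linear_extensions n P. \<not> contains_231 w \<and> \<not> contains_321 w}"

end

theory Submission
  imports Defs
begin



definition cl :: "nat \<Rightarrow> nat \<Rightarrow> nat \<Rightarrow> bool" where
  "cl s x y \<longleftrightarrow> 1 \<le> x \<and> x \<le> s \<and> x < y \<and> (y \<le> s \<or> (x + s \<le> y \<and> y \<le> 2*s))"

lemma cover_cl: "comb_cover s x y \<Longrightarrow> cl s x y"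
  unfolding comb_cover_def cl_def by auto

lemma chain_less: "1 \<le> x \<Longrightarrow> x < y \<Longrightarrow> y \<le> s \<Longrightarrow> comb_less s x y"
proof (induction y)
  case 0 then show ?case by simp
next
  case (Suc y)
  show ?case
  proof (cases "x = y")
    case True
    then show ?thesis using Suc.prems unfolding comb_less_def comb_cover_def by auto
  next
    case False
    then have "comb_less s x y" using Suc by auto
    moreover have "comb_cover s y (Suc y)" using Suc.prems False unfolding comb_cover_def by auto
    ultimately show ?thesis unfolding comb_less_def by (meson tranclp.trancl_into_trancl)
  qed
qed

lemma comb_less_iff: "comb_less s x y \<longleftrightarrow> cl s x y"
proof
  assume "comb_less s x y"
  then have "(comb_cover s)\<^sup>+\<^sup>+ x y" by (simp add: comb_less_def)
  then show "cl s x y"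
  proof (induction rule: tranclp_induct)
    case (base y) then show ?case by (rule cover_cl)
  next
    case (step y z) then show ?case unfolding comb_cover_def cl_def by auto
  qed
next
  assume c: "cl s x y"
  show "comb_less s x y"
  proof (cases "y \<le> s")
    case True then show ?thesis using c chain_less unfolding cl_def by auto
  next
    case False
    then have y: "x + s \<le> y" "y \<le> 2*s" "1 \<le> x" "x \<le> s" using c unfolding cl_def by auto
    have cv: "comb_cover s (y - s) y" using y unfolding comb_cover_def by auto
    show ?thesis
    proof (cases "x = y - s")
      case True then show ?thesis using cv unfolding comb_less_def by auto
    next
      case False
      then have "comb_less s x (y - s)" using y by (intro chain_less) auto
      then show ?thesis using cv unfolding comb_less_def by (meson tranclp.trancl_into_trancl)
    qed
  qed
qed




definition np :: "nat list \<Rightarrow> bool" where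
  "np w \<longleftrightarrow> (\<forall>i j k. i < j \<longrightarrow> j < k \<longrightarrow> k < length w \<longrightarrow> \<not> (w!k < w!i \<and> w!k < w!j))"

definition ordr :: "nat \<Rightarrow> nat list \<Rightarrow> bool" where
  "ordr s w \<longleftrightarrow> (\<forall>i j. i < length w \<longrightarrow> j < length w \<longrightarrow> cl s (w!i) (w!j) \<longrightarrow> i < j)"

definition L :: "nat \<Rightarrow> nat \<Rightarrow> nat list set" where
  "L s m = {w. distinct w \<and> set w = {1..m} \<and> ordr s w \<and> np w}"

lemma np_iff: "distinct w \<Longrightarrow> (\<not> contains_231 w \<and> \<not> contains_321 w) \<longleftrightarrow> np w"
proof
  assume d: "distinct w"
  assume "\<not> contains_231 w \<and> \<not> contains_321 w"
  then show "np w" unfolding np_def contains_231_def contains_321_def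
  proof (intro allI impI notI)
    fix i j k assume h: "\<not> (\<exists>i j k. i < j \<and> j < k \<and> k < length w \<and> w ! k < w ! i \<and> w ! i < w ! j) \<and>
    \<not> (\<exists>i j k. i < j \<and> j < k \<and> k < length w \<and> w ! k < w ! j \<and> w ! j < w ! i)"
      "i < j" "j < k" "k < length w" "w ! k < w ! i \<and> w ! k < w ! j"
    have "w ! i \<noteq> w ! j" using d h(2,3,4) by (simp add: nth_eq_iff_index_eq)
    then show False using h by (meson linorder_neq_iff)
  qed
next
  assume "np w" then show "\<not> contains_231 w \<and> \<not> contains_321 w"
    unfolding np_def contains_231_def contains_321_def by (meson order.strict_trans)
qed

lemma main_set: "{w \<in> linear_extensions (2*s) (comb_less s). \<not> contains_231 w \<and> \<not> contains_321 w} = L s (2*s)"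
proof -
  have e: "comb_less s = cl s" by (intro ext) (simp add: comb_less_iff)
  show ?thesis unfolding linear_extensions_def L_def e ordr_def using np_iff by blast
qed




lemma nthw:
  assumes "length u = t" "t < m" "k < m"
  shows "(u @ m # [Suc t..<m]) ! k = (if k < t then u!k else if k = t then m else k)"
proof -
  consider "k < t" | "k = t" | "t < k" by linarith
  then show ?thesis
  proof cases
    case 1 then show ?thesis using assms by (simp add: nth_append)
  next
    case 2 then show ?thesis using assms by (simp add: nth_append)
  next
    case 3
    define d where "d = k - Suc t"
    then have d: "k = Suc t + d" using 3 by simp
    show ?thesis using assms 3 d by (simp add: nth_append)
  qed
qed

lemma L_len: "u \<in> L s t \<Longrightarrow> length u = t"
  unfolding L_def by (metis (mono_tags, lifting) card_atLeastAtMost diff_Suc_1 distinct_card mem_Collect_eq)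

lemma L_cons:
  assumes u: "u \<in> L s t" and tm: "t < m" and c: "t = m - 1 \<or> (s < m \<and> m - s \<le> t)"
  shows "u @ m # [Suc t..<m] \<in> L s m"
proof -
  let ?w = "u @ m # [Suc t..<m]"
  have lu: "length u = t" using L_len[OF u] .
  have du: "distinct u" and su: "set u = {1..t}" and ou: "ordr s u" and npu: "np u"
    using u unfolding L_def by auto
  have lw: "length ?w = m" using lu tm by simp
  have nw: "\<And>k. k < m \<Longrightarrow> ?w ! k = (if k < t then u!k else if k = t then m else k)"
    using nthw[OF lu tm] by blast
  have ub: "\<And>k. k < t \<Longrightarrow> 1 \<le> u!k \<and> u!k \<le> t"
    using su lu by (metis atLeastAtMost_iff nth_mem)
  have "distinct ?w" using du su tm by auto
  moreover have "set ?w = {1..m}" using su tm by auto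
  moreover have "np ?w"
    unfolding np_def
  proof (intro allI impI notI)
    fix i j k assume h: "i < j" "j < k" "k < length ?w" "?w ! k < ?w ! i \<and> ?w ! k < ?w ! j"
    have k: "k < m" using h lw by simp
    consider "k < t" | "k = t" | "t < k" by linarith
    then show False
    proof cases
      case 1
      then show ?thesis using h nw[of i] nw[of j] nw[of k] k npu lu unfolding np_def by auto
    next
      case 2
      then have "?w ! i \<le> t" using h nw[of i] ub[of i] k by auto
      then show ?thesis using h 2 nw[of k] k tm by auto
    next
      case 3
      have vi: "?w ! i < k \<or> i = t"
      proof (cases "i < t")
        case True then show ?thesis using nw[of i] ub[of i] h k 3 by auto
      qed (use nw[of i] h k 3 in auto)
      have vj: "?w ! j < k \<or> j = t"
      proof (cases "j < t")
        case True then show ?thesis using nw[of j] ub[of j] h k 3 by auto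
      qed (use nw[of j] h k 3 in auto)
      show ?thesis using vi vj h nw[of k] k 3 by auto
    qed
  qed
  moreover have "ordr s ?w"
    unfolding ordr_def
  proof (intro allI impI)
    fix i j assume h: "i < length ?w" "j < length ?w" "cl s (?w ! i) (?w ! j)"
    have ij: "i < m" "j < m" using h lw by auto
    have lt: "?w ! i < ?w ! j" using h(3) unfolding cl_def by auto
    show "i < j"
    proof (rule ccontr)
      assume "\<not> i < j"
      then have ji: "j \<le> i" by simp
      consider "i < t" | "i = t" | "t < i" by linarith
      then show False
      proof cases
        case 1
        then have "j < t" using ji by simp
        then have "cl s (u!i) (u!j)" using 1 h(3) nw[OF ij(1)] nw[OF ij(2)] by auto
        then have "i < j" using ou lu 1 \<open>j < t\<close> unfolding ordr_def by blast
        then show ?thesis using ji by simp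
      next
        case 2
        have "j \<noteq> i" using lt by (metis less_irrefl)
        then have "j < t" using ji 2 by auto
        then show ?thesis using 2 lt nw[OF ij(1)] nw[OF ij(2)] ub[of j] tm by auto
      next
        case 3
        consider "j < t" | "j = t" | "t < j" by linarith
        then show ?thesis
        proof cases
          case 1 then show ?thesis using 3 lt nw[OF ij(1)] nw[OF ij(2)] ub[of j] by auto
        next
          case 2
          have "cl s i m" using h(3) nw[OF ij(1)] nw[OF ij(2)] 2 3 by auto
          then show ?thesis using c 3 ij unfolding cl_def by auto
        next
          case 4: 3
          then show ?thesis using 3 lt nw[OF ij(1)] nw[OF ij(2)] ji by auto
        qed
      qed
    qed
  qed
  ultimately show ?thesis unfolding L_def by blast
qed




lemma split_lt:
  assumes np: "np (u @ m # v)" and d: "distinct (u @ m # v)" and st: "set (u @ m # v) = {1..m}"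
    and x: "x \<in> set u" and y: "y \<in> set v"
  shows "x < y"
proof -
  let ?w = "u @ m # v"
  obtain i where i: "i < length u" "u ! i = x" using x by (auto simp: in_set_conv_nth)
  obtain k where k: "k < length v" "v ! k = y" using y by (auto simp: in_set_conv_nth)
  have wi: "?w ! i = x" using i by (simp add: nth_append)
  have wp: "?w ! length u = m" by simp
  have wk: "?w ! (length u + Suc k) = y" using k by (simp add: nth_append)
  have "y \<noteq> m" using d y by auto
  moreover have "y \<le> m" using st y by auto
  ultimately have ym: "y < m" by simp
  have "x \<noteq> y" using d x y by auto
  moreover have "\<not> (y < x \<and> y < m)"
    using np[unfolded np_def, rule_format, of i "length u" "length u + Suc k"] i k wi wp wk by simp
  ultimately show ?thesis using ym by simp
qed

lemma split_sorted:
  assumes np: "np (u @ m # v)" and d: "distinct (u @ m # v)" and st: "set (u @ m # v) = {1..m}"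
  shows "sorted v"
  unfolding sorted_iff_nth_mono_less
proof (intro allI impI)
  fix i j assume h: "i < j" "j < length v"
  let ?w = "u @ m # v"
  have wp: "?w ! length u = m" by simp
  have wi: "?w ! (length u + Suc i) = v ! i" using h by (simp add: nth_append)
  have wj: "?w ! (length u + Suc j) = v ! j" using h by (simp add: nth_append)
  have "v ! j \<in> set v" using h by simp
  then have "v ! j \<noteq> m" "v ! j \<le> m" using d st by auto
  then have ym: "v ! j < m" by simp
  have "\<not> (v ! j < v ! i \<and> v ! j < m)"
    using np[unfolded np_def, rule_format, of "length u" "length u + Suc i" "length u + Suc j"] h wi wp wj by auto
  then show "v ! i \<le> v ! j" using ym by simp
qed




lemma main_split:
  fixes u v :: "nat list"
  assumes lt: "\<And>x y. x \<in> set u \<Longrightarrow> y \<in> set v \<Longrightarrow> x < y"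
    and sv: "sorted v" and dv: "distinct v" and du: "distinct u"
    and memb: "\<And>x. (x \<in> set u \<or> x \<in> set v) \<longleftrightarrow> (1 \<le> x \<and> x < m)" and m1: "1 \<le> m" and t_def: "t = length u"
  shows "set u = {1..t} \<and> v = [Suc t..<m]"
proof (cases "v = []")
  case True
  have su: "set u = {1..<m}"
  proof (intro set_eqI)
    fix x show "x \<in> set u \<longleftrightarrow> x \<in> {1..<m}" using memb[of x] True by simp
  qed
  then have "t = m - 1" using t_def distinct_card[OF du] by simp
  then have tm: "Suc t = m" using m1 by simp
  then have "{1..t} = {1..<m}" using atLeastLessThanSuc_atLeastAtMost[of 1 t] by simp
  then show ?thesis using True su tm by simp
next
  case False
  then obtain c v' where cv: "v = c # v'" by (cases v) auto
  have cmin: "\<And>y. y \<in> set v \<Longrightarrow> c \<le> y" using sv cv by auto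
  have cin: "c \<in> set v" using cv by simp
  have c1: "1 \<le> c" and cm: "c < m" using memb[of c] cin by simp_all
  have svc: "set v = {c..<m}"
  proof (intro set_eqI)
    fix x
    show "x \<in> set v \<longleftrightarrow> x \<in> {c..<m}"
    proof
      assume x: "x \<in> set v"
      then have "c \<le> x" using cmin by blast
      moreover have "x < m" using memb[of x] x by simp
      ultimately show "x \<in> {c..<m}" by simp
    next
      assume x: "x \<in> {c..<m}"
      have "x \<notin> set u"
      proof
        assume "x \<in> set u"
        then have "x < c" using lt cin by blast
        then show False using x by simp
      qed
      moreover have "1 \<le> x \<and> x < m" using x c1 by simp
      ultimately show "x \<in> set v" using memb[of x] by blast
    qed
  qed
  have suc: "set u = {1..<c}"
  proof (intro set_eqI)
    fix x
    show "x \<in> set u \<longleftrightarrow> x \<in> {1..<c}"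
    proof
      assume x: "x \<in> set u"
      then have "x < c" using lt cin by blast
      moreover have "1 \<le> x" using memb[of x] x by simp
      ultimately show "x \<in> {1..<c}" by simp
    next
      assume x: "x \<in> {1..<c}"
      have "x \<notin> set v"
      proof
        assume "x \<in> set v"
        then have "c \<le> x" using cmin by blast
        then show False using x by simp
      qed
      moreover have "1 \<le> x \<and> x < m" using x cm by simp
      ultimately show "x \<in> set u" using memb[of x] by blast
    qed
  qed
  have "t = c - 1" using t_def distinct_card[OF du] suc by simp
  then have ct: "c = Suc t" using c1 by simp
  have "v = [Suc t..<m]"
    using sorted_distinct_set_unique[OF sv dv, of "[Suc t..<m]"] svc ct by simp
  moreover have "set u = {1..t}" using suc ct by (simp add: atLeastLessThanSuc_atLeastAtMost)
  ultimately show ?thesis by simp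
qed

lemma L_dec:
  assumes w: "w \<in> L s m" and m1: "1 \<le> m" and m2: "m \<le> 2*s"
  shows "\<exists>t u. t < m \<and> (t = m - 1 \<or> (s < m \<and> m - s \<le> t)) \<and> u \<in> L s t \<and> w = u @ m # [Suc t..<m]"
proof -
  have dw: "distinct w" and sw: "set w = {1..m}" and ow: "ordr s w" and npw: "np w"
    using w unfolding L_def by auto
  have "m \<in> set w" using sw m1 by auto
  then obtain p where p: "p < length w" "w ! p = m" by (auto simp: in_set_conv_nth)
  define u where "u = take p w"
  define v where "v = drop (Suc p) w"
  have weq: "w = u @ m # v" unfolding u_def v_def using id_take_nth_drop[OF p(1)] p(2) by simp
  define t where "t = length u"
  have d': "distinct (u @ m # v)" and s': "set (u @ m # v) = {1..m}" and n': "np (u @ m # v)"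
    using dw sw npw weq by auto
  have lt: "\<And>x y. x \<in> set u \<Longrightarrow> y \<in> set v \<Longrightarrow> x < y" using split_lt[OF n' d' s'] by blast
  have sv: "sorted v" using split_sorted[OF n' d' s'] .
  have dv: "distinct v" using d' by simp
  have du: "distinct u" using d' by simp
  have mu: "m \<notin> set u" and mv: "m \<notin> set v" using d' by auto
  have memb: "\<And>x. (x \<in> set u \<or> x \<in> set v) \<longleftrightarrow> (1 \<le> x \<and> x < m)"
  proof -
    fix x
    have "x \<in> set (u @ m # v) \<longleftrightarrow> x \<in> {1..m}" by (simp only: s')
    then have "(x \<in> set u \<or> x = m \<or> x \<in> set v) \<longleftrightarrow> (1 \<le> x \<and> x \<le> m)" by auto
    then show "(x \<in> set u \<or> x \<in> set v) \<longleftrightarrow> (1 \<le> x \<and> x < m)" using mu mv m1 by (cases "x = m") auto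
  qed
  have main: "set u = {1..t} \<and> v = [Suc t..<m]"
    by (rule main_split[OF lt sv dv du memb m1 t_def])
  have tm: "t < m"
  proof -
    have "length w = m" using distinct_card[OF dw] sw by simp
    then show ?thesis using p(1) unfolding t_def u_def by simp
  qed
  have w2: "w = u @ m # [Suc t..<m]" using weq main by simp
  have lu: "length u = t" by (simp add: t_def)
  have nw: "\<And>k. k < m \<Longrightarrow> w ! k = (if k < t then u!k else if k = t then m else k)"
    using nthw[OF lu tm] w2 by simp
  have lw: "length w = m" using w2 lu tm by simp
  have uL: "u \<in> L s t"
    unfolding L_def
  proof (intro CollectI conjI)
    show "distinct u" by (rule du)
    show "set u = {1..t}" using main by simp
    show "ordr s u" unfolding ordr_def
    proof (intro allI impI)
      fix i j assume h: "i < length u" "j < length u" "cl s (u ! i) (u ! j)"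
      then show "i < j" using ow[unfolded ordr_def, rule_format, of i j] nw[of i] nw[of j] lu tm lw by auto
    qed
    show "np u" unfolding np_def
    proof (intro allI impI)
      fix i j k assume h: "i < j" "j < k" "k < length u"
      then show "\<not> (u ! k < u ! i \<and> u ! k < u ! j)"
        using npw[unfolded np_def, rule_format, of i j k] nw[of i] nw[of j] nw[of k] lu tm lw by auto
    qed
  qed
  have cond: "t = m - 1 \<or> (s < m \<and> m - s \<le> t)"
  proof (rule ccontr)
    assume nc: "\<not> ?thesis"
    then have "t \<noteq> m - 1" by blast
    then have tm1: "t < m - 1" using tm by linarith
    have a: "\<not> cl s (m - 1) m"
    proof
      assume "cl s (m - 1) m"
      moreover have "w ! (m - 1) = m - 1" using nw[of "m - 1"] tm1 by simp
      moreover have "w ! t = m" using nw[of t] tm by simp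
      ultimately have "m - 1 < t" using ow[unfolded ordr_def, rule_format, of "m - 1" t] tm1 tm lw by simp
      then show False using tm1 by simp
    qed
    then have sm: "s < m" using tm1 unfolding cl_def by auto
    have b: "\<not> cl s (Suc t) m"
    proof
      assume "cl s (Suc t) m"
      moreover have "w ! (Suc t) = Suc t" using nw[of "Suc t"] tm1 by simp
      moreover have "w ! t = m" using nw[of t] tm by simp
      moreover have "Suc t < m" using tm1 by linarith
      ultimately have "Suc t < t" using ow[unfolded ordr_def, rule_format, of "Suc t" t] tm lw by simp
      then show False by simp
    qed
    then have "m - s \<le> t" using sm tm1 m2 unfolding cl_def by auto
    then show False using nc sm by simp
  qed
  show ?thesis using tm cond uL w2 by blast
qed




definition G :: "nat \<Rightarrow> nat \<Rightarrow> nat" where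
  "G s m = (if m \<le> s then 1 else 2^(m-s-1)*(s-1)+1)"

lemma shift_sum: "a < b \<Longrightarrow> sum f {Suc a..<Suc b} + f a = sum f {a..<b} + (f b :: nat)"
  using sum.atLeast_Suc_lessThan[of a b f] sum.atLeastLessThan_Suc[of "Suc a" b f]
  by (cases "Suc a = b") auto

lemma sumG_aux: "1 \<le> s \<Longrightarrow> s + Suc d \<le> 2*s \<Longrightarrow> (\<Sum>t\<in>{s + Suc d - s..<s + Suc d}. G s t) = G s (s + Suc d)"
proof (induction d)
  case 0
  have "(\<Sum>t\<in>{1..<s+1}. G s t) = (\<Sum>t\<in>{1..<s+1}. 1)"
    by (intro sum.cong) (auto simp: G_def)
  then show ?case using 0 by (simp add: G_def)
next
  case (Suc d)
  let ?m = "s + Suc d"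
  have IH: "(\<Sum>t\<in>{Suc d..<?m}. G s t) = G s ?m" using Suc by simp
  have "(\<Sum>t\<in>{Suc (Suc d)..<Suc ?m}. G s t) + G s (Suc d) = (\<Sum>t\<in>{Suc d..<?m}. G s t) + G s ?m"
    by (rule shift_sum) (use Suc.prems in simp)
  moreover have "G s (Suc d) = 1" using Suc.prems by (simp add: G_def)
  moreover have "G s (Suc ?m) = 2 * G s ?m - 1" using Suc.prems
    by (simp add: G_def)
  moreover have "G s ?m \<ge> 1" by (simp add: G_def)
  ultimately show ?case using IH by simp
qed

lemma sumG: "1 \<le> s \<Longrightarrow> s < m \<Longrightarrow> m \<le> 2*s \<Longrightarrow> (\<Sum>t\<in>{m - s..<m}. G s t) = G s m"
  using sumG_aux[of s "m - s - 1"] by simp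




definition D :: "nat \<Rightarrow> nat \<Rightarrow> nat set" where
  "D s m = {t. t < m \<and> (t = m - 1 \<or> (s < m \<and> m - s \<le> t))}"

lemma L_zero: "L s 0 = {[]}"
  unfolding L_def ordr_def np_def by auto

lemma L_fin: "finite (L s m)"
proof (rule finite_subset)
  show "L s m \<subseteq> {xs. set xs \<subseteq> {1..m} \<and> length xs \<le> m}"
    unfolding L_def using distinct_card by fastforce
  show "finite {xs. set xs \<subseteq> {1..m} \<and> length xs \<le> m}"
    by (rule finite_lists_length_le) simp
qed

lemma L_eq:
  assumes "1 \<le> m" "m \<le> 2*s"
  shows "L s m = (\<Union>t\<in>D s m. (\<lambda>u. u @ m # [Suc t..<m]) ` L s t)"
proof
  show "L s m \<subseteq> (\<Union>t\<in>D s m. (\<lambda>u. u @ m # [Suc t..<m]) ` L s t)"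
    using L_dec[OF _ assms] unfolding D_def by blast
  show "(\<Union>t\<in>D s m. (\<lambda>u. u @ m # [Suc t..<m]) ` L s t) \<subseteq> L s m"
    using L_cons unfolding D_def by blast
qed

lemma tw: "u \<in> L s t \<Longrightarrow> t < m \<Longrightarrow> takeWhile (\<lambda>x. x \<noteq> m) (u @ m # v) = u"
proof -
  assume u: "u \<in> L s t" and tm: "t < m"
  have "\<forall>x\<in>set u. x \<noteq> m" using u tm unfolding L_def by auto
  then show ?thesis by (simp add: takeWhile_append2)
qed

lemma card_L_rec:
  assumes "1 \<le> m" "m \<le> 2*s"
  shows "card (L s m) = (\<Sum>t\<in>D s m. card (L s t))"
proof -
  have fD: "finite (D s m)" unfolding D_def by simp
  have "card (L s m) = (\<Sum>t\<in>D s m. card ((\<lambda>u. u @ m # [Suc t..<m]) ` L s t))"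
    unfolding L_eq[OF assms]
  proof (rule card_UN_disjoint[OF fD])
    show "\<forall>i\<in>D s m. finite ((\<lambda>u. u @ m # [Suc i..<m]) ` L s i)" using L_fin by blast
    show "\<forall>i\<in>D s m. \<forall>j\<in>D s m. i \<noteq> j \<longrightarrow>
      (\<lambda>u. u @ m # [Suc i..<m]) ` L s i \<inter> (\<lambda>u. u @ m # [Suc j..<m]) ` L s j = {}"
    proof (intro ballI impI)
      fix i j assume ij: "i \<in> D s m" "j \<in> D s m" "i \<noteq> j"
      show "(\<lambda>u. u @ m # [Suc i..<m]) ` L s i \<inter> (\<lambda>u. u @ m # [Suc j..<m]) ` L s j = {}"
      proof (rule ccontr)
        assume "\<not> ?thesis"
        then obtain u u' where uu: "u \<in> L s i" "u' \<in> L s j" "u @ m # [Suc i..<m] = u' @ m # [Suc j..<m]"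
          by blast
        have "u = u'" using tw[OF uu(1), of m "[Suc i..<m]"] tw[OF uu(2), of m "[Suc j..<m]"] uu(3) ij
          unfolding D_def by auto
        then show False using L_len[OF uu(1)] L_len[OF uu(2)] ij(3) by simp
      qed
    qed
  qed
  also have "\<dots> = (\<Sum>t\<in>D s m. card (L s t))"
  proof (rule sum.cong)
    fix t assume "t \<in> D s m"
    have "inj_on (\<lambda>u. u @ m # [Suc t..<m]) (L s t)" by (rule inj_onI) simp
    then show "card ((\<lambda>u. u @ m # [Suc t..<m]) ` L s t) = card (L s t)" by (rule card_image)
  qed simp
  finally show ?thesis .
qed

lemma card_L: "1 \<le> s \<Longrightarrow> m \<le> 2*s \<Longrightarrow> card (L s m) = G s m"
proof (induction m rule: less_induct)
  case (less m)
  show ?case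
  proof (cases "m = 0")
    case True then show ?thesis by (simp add: L_zero G_def)
  next
    case False
    then have m1: "1 \<le> m" by simp
    have "card (L s m) = (\<Sum>t\<in>D s m. card (L s t))" using card_L_rec[OF m1 less.prems(2)] .
    also have "\<dots> = (\<Sum>t\<in>D s m. G s t)"
      by (rule sum.cong) (use less in \<open>auto simp: D_def\<close>)
    also have "\<dots> = G s m"
    proof (cases "m \<le> s")
      case True
      then have "D s m = {m - 1}" unfolding D_def using m1 by auto
      then show ?thesis using True by (simp add: G_def)
    next
      case False
      then have "D s m = {m - s..<m}" unfolding D_def using m1 less.prems(1) by auto
      then show ?thesis using sumG[OF less.prems(1) _ less.prems(2)] False by simp
    qed
    finally show ?thesis .
  qed
qed

theorem mainTheorem11:
  fixes s :: nat
  assumes "s \<ge> 1"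
  shows "A_231_321 (2 * s) (comb_less s) = 2 ^ (s - 1) * (s - 1) + 1"
proof -
  have "A_231_321 (2 * s) (comb_less s) = card (L s (2*s))"
    unfolding A_231_321_def main_set ..
  also have "\<dots> = G s (2*s)" using card_L assms by simp
  also have "\<dots> = 2 ^ (s - 1) * (s - 1) + 1" using assms by (simp add: G_def)
  finally show ?thesis .
qed


end
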